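(* Let $h_1,\dots,h_{2k}$ satisfy the FFD relations with $h_j^2=b_j^2\mathbb{1}$, $b_j\neq0$, and let $\theta_1,\dots,\theta_{2k}$ be arbitrary complex numbers with $\cos\theta_j\neq0$. Write $c_j:=\cos\theta_j$, $h'_j:=\sin\theta_j\,b_j^{-1}h_j$, with the conventions $c_j:=1$, $h'_j:=0$ for $j\le0$. Then $$\mathcal{V}_{2k}=\mathcal{V}_{2k-2}+\big(c_{2k-2}h'_{2k}+c_{2k}c_{2k-2}c_{2k-3}h'_{2k-1}+c_{2k-5}h'_{2k-2}h'_{2k-3}h'_{2k}\big)\mathcal{V}_{2k-4}+c_{2k-4}c_{2k-5}h'_{2k}h'_{2k-3}\mathcal{V}_{2k-6}+c_{2k-4}c_{2k-5}c_{2k-6}c_{2k-7}h'_{2k-5}h'_{2k-2}h'_{2k-3}h'_{2k}\mathcal{V}_{2k-8},$$ and $$\mathcal{V}_{2k-1}=\mathcal{V}_{2k-2}+c_{2k-2}c_{2k-3}h'_{2k-1}\mathcal{V}_{2k-4},$$ where $\mathcal{V}_j:=\mathbb{1}$ for $j\le0$.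
   Context: FFD relations: $h_mh_{m+1}=-h_{m+1}h_m$, $h_mh_{m+2}=-h_{m+2}h_m$, $h_mh_l=h_lh_m$ for $|l-m|>2$, $h_m^2=b_m^2\mathbb{1}$, in a unital associative complex algebra. Local gates $g_j:=\cos(\theta_j/2)\mathbb{1}+\sin(\theta_j/2)\,b_j^{-1}h_j$. For $1\le n\le k$: $G_{2n}:=(g_2g_1)(g_4g_3)\cdots(g_{2n}g_{2n-1})$, $G_{2n}^{\top}:=(g_{2n-1}g_{2n})\cdots(g_3g_4)(g_1g_2)$ (reversed order), $\mathcal{V}_{2n}:=G_{2n}G_{2n}^{\top}$; $G_{2n-1}$ and $\mathcal{V}_{2n-1}$ are obtained from $G_{2n}$, $\mathcal{V}_{2n}$ by setting $\theta_{2n}=0$ (i.e. $g_{2n}=\mathbb{1}$). All $\mathcal{V}_j$ use the same angles $\theta_1,\theta_2,\dots$. *)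

theory Defs
  imports Complex_Main
begin

text \<open>A unital associative complex algebra is modelled as a ring 'a :: ring_1 together
with a unital ring homomorphism emb from the complex numbers into the centre of 'a;
scalar multiplication c x is emb c * x.\<close>

definition complex_alg_emb :: "(complex \<Rightarrow> 'a::ring_1) \<Rightarrow> bool" where
  "complex_alg_emb emb \<longleftrightarrow>
     (\<forall>x y. emb (x + y) = emb x + emb y) \<and>
     (\<forall>x y. emb (x * y) = emb x * emb y) \<and>
     emb 1 = 1 \<and>
     (\<forall>x a. emb x * a = a * emb x)"

definition FFD :: "(complex \<Rightarrow> 'a::ring_1) \<Rightarrow> nat \<Rightarrow> (nat \<Rightarrow> 'a) \<Rightarrow> (nat \<Rightarrow> complex) \<Rightarrow> bool" where
  "FFD emb N h b \<longleftrightarrow>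
     (\<forall>m. 1 \<le> m \<and> m + 1 \<le> N \<longrightarrow> h m * h (m+1) = - (h (m+1) * h m)) \<and>
     (\<forall>m. 1 \<le> m \<and> m + 2 \<le> N \<longrightarrow> h m * h (m+2) = - (h (m+2) * h m)) \<and>
     (\<forall>m l. 1 \<le> m \<and> m \<le> N \<and> 1 \<le> l \<and> l \<le> N \<and> (m + 2 < l \<or> l + 2 < m)
             \<longrightarrow> h m * h l = h l * h m) \<and>
     (\<forall>m. 1 \<le> m \<and> m \<le> N \<longrightarrow> h m * h m = emb ((b m)^2))"

definition gate :: "(complex \<Rightarrow> 'a::ring_1) \<Rightarrow> (nat \<Rightarrow> complex) \<Rightarrow> (nat \<Rightarrow> 'a)
                    \<Rightarrow> (nat \<Rightarrow> complex) \<Rightarrow> nat \<Rightarrow> 'a" where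
  "gate emb b h \<theta> j = emb (cos (\<theta> j / 2)) + emb (sin (\<theta> j / 2) / b j) * h j"

definition Gprod :: "(nat \<Rightarrow> 'a::ring_1) \<Rightarrow> nat \<Rightarrow> 'a" where
  "Gprod g n = prod_list (map (\<lambda>m. g (2*m) * g (2*m - 1)) [1..<n+1])"

definition GprodT :: "(nat \<Rightarrow> 'a::ring_1) \<Rightarrow> nat \<Rightarrow> 'a" where
  "GprodT g n = prod_list (map (\<lambda>m. g (2*m - 1) * g (2*m)) (rev [1..<n+1]))"

definition Veven :: "(complex \<Rightarrow> 'a::ring_1) \<Rightarrow> (nat \<Rightarrow> complex) \<Rightarrow> (nat \<Rightarrow> 'a)
                    \<Rightarrow> (nat \<Rightarrow> complex) \<Rightarrow> nat \<Rightarrow> 'a" where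
  "Veven emb b h \<theta> n = Gprod (gate emb b h \<theta>) n * GprodT (gate emb b h \<theta>) n"

definition Vop :: "(complex \<Rightarrow> 'a::ring_1) \<Rightarrow> (nat \<Rightarrow> complex) \<Rightarrow> (nat \<Rightarrow> 'a)
                    \<Rightarrow> (nat \<Rightarrow> complex) \<Rightarrow> int \<Rightarrow> 'a" where
  "Vop emb b h \<theta> j =
     (if j \<le> 0 then 1
      else if even j then Veven emb b h \<theta> (nat j div 2)
      else Veven emb b h (\<theta>(nat j + 1 := 0)) ((nat j + 1) div 2))"

definition cc :: "(nat \<Rightarrow> complex) \<Rightarrow> int \<Rightarrow> complex" where
  "cc \<theta> j = (if j \<le> 0 then 1 else cos (\<theta> (nat j)))"

definition hp :: "(complex \<Rightarrow> 'a::ring_1) \<Rightarrow> (nat \<Rightarrow> complex) \<Rightarrow> (nat \<Rightarrow> 'a)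
                    \<Rightarrow> (nat \<Rightarrow> complex) \<Rightarrow> int \<Rightarrow> 'a" where
  "hp emb b h \<theta> j = (if j \<le> 0 then 0 else emb (sin (\<theta> (nat j)) / b (nat j)) * h (nat j))"

end

theory Submission
  imports Defs
begin


definition gd :: "(complex \<Rightarrow> 'a::ring_1) \<Rightarrow> (nat \<Rightarrow> complex) \<Rightarrow> (nat \<Rightarrow> 'a)
                    \<Rightarrow> (nat \<Rightarrow> complex) \<Rightarrow> nat \<Rightarrow> 'a" where
  "gd emb b h \<theta> j = emb (cos (\<theta> j / 2)) - emb (sin (\<theta> j / 2) / b j) * h j"

definition WW :: "(complex \<Rightarrow> 'a::ring_1) \<Rightarrow> (nat \<Rightarrow> complex) \<Rightarrow> (nat \<Rightarrow> 'a)
                    \<Rightarrow> (nat \<Rightarrow> complex) \<Rightarrow> nat \<Rightarrow> 'a \<Rightarrow> 'a" where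
  "WW emb b h \<theta> n x = Gprod (gate emb b h \<theta>) n * x * GprodT (gate emb b h \<theta>) n"

lemma Gprod_0: "Gprod g 0 = 1" by (simp add: Gprod_def)
lemma GprodT_0: "GprodT g 0 = 1" by (simp add: GprodT_def)
lemma Gprod_Suc: "Gprod g (Suc n) = Gprod g n * (g (2*n+2) * g (2*n+1))"
  by (simp add: Gprod_def)
lemma GprodT_Suc: "GprodT g (Suc n) = (g (2*n+1) * g (2*n+2)) * GprodT g n"
  by (simp add: GprodT_def)

lemma Gprod_cong: "(\<And>j. 1 \<le> j \<Longrightarrow> j \<le> 2*n \<Longrightarrow> f j = f' j) \<Longrightarrow> Gprod f n = Gprod f' n"
  by (induction n) (auto simp: Gprod_0 Gprod_Suc)
lemma GprodT_cong: "(\<And>j. 1 \<le> j \<Longrightarrow> j \<le> 2*n \<Longrightarrow> f j = f' j) \<Longrightarrow> GprodT f n = GprodT f' n"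
  by (induction n) (auto simp: GprodT_0 GprodT_Suc)

lemma cm: "a*x = x*a \<Longrightarrow> c*x = x*(c::'a::ring_1) \<Longrightarrow> a*c*x = x*(a*c)"
  by (metis mult.assoc)

lemma Gprod_comm: "(\<And>j. 1 \<le> j \<Longrightarrow> j \<le> 2*n \<Longrightarrow> g j * x = x * g j) \<Longrightarrow> Gprod g n * x = x * Gprod g n"
proof (induction n)
  case 0 then show ?case by (simp add: Gprod_0)
next
  case (Suc n)
  have a: "g (2*n+2) * x = x * g (2*n+2)" "g (2*n+1) * x = x * g (2*n+1)" using Suc.prems by auto
  have "Gprod g n * x = x * Gprod g n" using Suc by auto
  then show ?case unfolding Gprod_Suc by (intro cm a)
qed

lemma GprodT_comm: "(\<And>j. 1 \<le> j \<Longrightarrow> j \<le> 2*n \<Longrightarrow> g j * x = x * g j) \<Longrightarrow> GprodT g n * x = x * GprodT g n"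
proof (induction n)
  case 0 then show ?case by (simp add: GprodT_0)
next
  case (Suc n)
  have a: "g (2*n+2) * x = x * g (2*n+2)" "g (2*n+1) * x = x * g (2*n+1)" using Suc.prems by auto
  have "GprodT g n * x = x * GprodT g n" using Suc by auto
  then show ?case unfolding GprodT_Suc by (intro cm a)
qed

context
  fixes emb :: "complex \<Rightarrow> 'a::ring_1"
  assumes emb: "complex_alg_emb emb"
begin

lemma emb_add: "emb (x + y) = emb x + emb y" using emb unfolding complex_alg_emb_def by blast
lemma emb_mult: "emb (x * y) = emb x * emb y" using emb unfolding complex_alg_emb_def by blast
lemma emb_1: "emb 1 = 1" using emb unfolding complex_alg_emb_def by blast
lemma emb_c: "emb x * a = a * emb x" using emb unfolding complex_alg_emb_def by blast
lemma emb_0: "emb 0 = 0"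
proof -
  have a: "emb 0 = emb 0 + emb 0" using emb_add[of 0 0] by (simp only: add_0_left)
  show ?thesis using a by (rule iffD1[OF add_cancel_right_right])
qed
lemma emb_uminus: "emb (- x) = - emb x"
proof -
  have "emb (-x + x) = emb (-x) + emb x" by (rule emb_add)
  then have "emb (-x) + emb x = 0" unfolding left_minus emb_0 by (rule sym)
  then show ?thesis by (simp add: eq_neg_iff_add_eq_0)
qed
lemma emb_diff: "emb (x - y) = emb x - emb y"
  using emb_add[of x "-y"] emb_uminus[of y] by simp


lemma emb_cz: "a * (emb x * z) = emb x * (a * z)"
  by (simp add: mult.assoc[symmetric] emb_c[of x a])

lemma WW_Suc: "WW emb b h \<theta> (Suc n) x = WW emb b h \<theta> n (gate emb b h \<theta> (2*n+2) * gate emb b h \<theta> (2*n+1) * x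
     * gate emb b h \<theta> (2*n+1) * gate emb b h \<theta> (2*n+2))"
  by (simp add: WW_def Gprod_Suc GprodT_Suc mult.assoc)

lemma WW_0: "WW emb b h \<theta> 0 x = x" by (simp add: WW_def Gprod_0 GprodT_0)

lemma WW_add: "WW emb b h \<theta> n (x + y) = WW emb b h \<theta> n x + WW emb b h \<theta> n y"
  by (simp add: WW_def distrib_left distrib_right)
lemma WW_diff: "WW emb b h \<theta> n (x - y) = WW emb b h \<theta> n x - WW emb b h \<theta> n y"
  by (simp add: WW_def left_diff_distrib right_diff_distrib)

lemma gate_cmt: assumes "x * h j = h j * x" shows "gate emb b h \<theta> j * x = x * gate emb b h \<theta> j"
proof -
  let ?a = "emb (cos (\<theta> j / 2))" and ?s = "emb (sin (\<theta> j / 2) / b j)"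
  have "gate emb b h \<theta> j * x = ?a * x + ?s * (h j * x)" by (simp add: gate_def distrib_right mult.assoc)
  also have "\<dots> = x * ?a + (?s * x) * h j" by (simp add: assms[symmetric] mult.assoc[symmetric] emb_c[of _ x])
  also have "\<dots> = x * ?a + x * ?s * h j" by (simp add: emb_c[of _ x])
  also have "\<dots> = x * gate emb b h \<theta> j" by (simp add: gate_def distrib_left mult.assoc)
  finally show ?thesis .
qed

lemma gate_acomm: assumes "x * h j = - (h j * x)" shows "gate emb b h \<theta> j * x = x * gd emb b h \<theta> j"
proof -
  let ?a = "emb (cos (\<theta> j / 2))" and ?s = "emb (sin (\<theta> j / 2) / b j)"
  have "gate emb b h \<theta> j * x = ?a * x + ?s * (h j * x)" by (simp add: gate_def distrib_right mult.assoc)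
  also have "h j * x = - (x * h j)" using assms by simp
  also have "?a * x + ?s * (- (x * h j)) = x * ?a - (?s * x) * h j" by (simp add: mult.assoc[symmetric] emb_c[of _ x])
  also have "\<dots> = x * ?a - x * ?s * h j" by (simp add: emb_c[of _ x])
  also have "\<dots> = x * gd emb b h \<theta> j" by (simp add: gd_def right_diff_distrib mult.assoc)
  finally show ?thesis .
qed

lemma gd_acomm: assumes "x * h j = - (h j * x)" shows "gd emb b h \<theta> j * x = x * gate emb b h \<theta> j"
proof -
  let ?a = "emb (cos (\<theta> j / 2))" and ?s = "emb (sin (\<theta> j / 2) / b j)"
  have "gd emb b h \<theta> j * x = ?a * x - ?s * (h j * x)" by (simp add: gd_def left_diff_distrib mult.assoc)
  also have "h j * x = - (x * h j)" using assms by simp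
  also have "?a * x - ?s * (- (x * h j)) = x * ?a + (?s * x) * h j" by (simp add: mult.assoc[symmetric] emb_c[of _ x])
  also have "\<dots> = x * ?a + x * ?s * h j" by (simp add: emb_c[of _ x])
  also have "\<dots> = x * gate emb b h \<theta> j" by (simp add: gate_def distrib_left mult.assoc)
  finally show ?thesis .
qed

lemma WW_left: "(\<And>j. 1 \<le> j \<Longrightarrow> j \<le> 2*n \<Longrightarrow> x * h j = h j * x) \<Longrightarrow>
   WW emb b h \<theta> n (x * y) = x * WW emb b h \<theta> n y"
proof -
  assume a: "\<And>j. 1 \<le> j \<Longrightarrow> j \<le> 2*n \<Longrightarrow> x * h j = h j * x"
  have "Gprod (gate emb b h \<theta>) n * x = x * Gprod (gate emb b h \<theta>) n"
    by (rule Gprod_comm) (simp add: a gate_cmt)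
  then show ?thesis unfolding WW_def by (simp add: mult.assoc[symmetric])
qed

lemma WW_emb: "WW emb b h \<theta> n (emb a * y) = emb a * WW emb b h \<theta> n y"
proof -
  have e: "\<And>j. emb a * h j = h j * emb a" by (rule emb_c)
  show ?thesis by (rule WW_left[OF e])
qed

end


definition Hn :: "(complex \<Rightarrow> 'a::ring_1) \<Rightarrow> (nat \<Rightarrow> complex) \<Rightarrow> (nat \<Rightarrow> 'a)
                    \<Rightarrow> (nat \<Rightarrow> complex) \<Rightarrow> nat \<Rightarrow> 'a" where
  "Hn emb b h \<theta> j = hp emb b h \<theta> (int j)"
definition Cn :: "(nat \<Rightarrow> complex) \<Rightarrow> nat \<Rightarrow> complex" where
  "Cn \<theta> j = cc \<theta> (int j)"
definition Vn :: "(complex \<Rightarrow> 'a::ring_1) \<Rightarrow> (nat \<Rightarrow> complex) \<Rightarrow> (nat \<Rightarrow> 'a)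
                    \<Rightarrow> (nat \<Rightarrow> complex) \<Rightarrow> nat \<Rightarrow> 'a" where
  "Vn emb b h \<theta> j = Vop emb b h \<theta> (int j)"

lemma Hn_0[simp]: "Hn emb b h \<theta> 0 = 0" by (simp add: Hn_def hp_def)
lemma Hn_pos: "j \<noteq> 0 \<Longrightarrow> Hn emb b h \<theta> j = emb (sin (\<theta> j) / b j) * h j" by (simp add: Hn_def hp_def)
lemma Cn_0[simp]: "Cn \<theta> 0 = 1" by (simp add: Cn_def cc_def)
lemma Cn_pos: "j \<noteq> 0 \<Longrightarrow> Cn \<theta> j = cos (\<theta> j)" by (simp add: Cn_def cc_def)
lemma Vn_0[simp]: "Vn emb b h \<theta> 0 = 1" by (simp add: Vn_def Vop_def)

lemma half_sq: "cos (t/2) * cos (t/2) + sin (t/2) * sin (t/2) = (1::complex)"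
  using sin_cos_squared_add[of "t/2"] by (simp add: power2_eq_square add.commute)
lemma half_cos: "cos (t/2) * cos (t/2) - sin (t/2) * sin (t/2) = cos (t::complex)"
  using cos_double[of "t/2"] by (simp add: power2_eq_square)
lemma half_sin: "2 * sin (t/2) * cos (t/2) = sin (t::complex)"
  using sin_double[of "t/2"] by simp

lemma r_aa: "x*z = -(z*x) \<Longrightarrow> y*z = -(z*y) \<Longrightarrow> (x*y)*z = z*(x*(y::'a::ring_1))"
proof -
  assume a: "x*z = -(z*x)" and c: "y*z = -(z*y)"
  have "(x*y)*z = x*(y*z)" by (rule mult.assoc)
  also have "\<dots> = -((x*z)*y)" using c by (simp add: mult.assoc)
  also have "\<dots> = (z*x)*y" using a by simp
  finally show ?thesis by (simp add: mult.assoc)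
qed
lemma r_ac: "x*z = -(z*x) \<Longrightarrow> y*z = z*y \<Longrightarrow> (x*y)*z = -(z*(x*(y::'a::ring_1)))"
proof -
  assume a: "x*z = -(z*x)" and c: "y*z = z*y"
  have "(x*y)*z = x*(y*z)" by (rule mult.assoc)
  also have "\<dots> = ((x*z)*y)" using c by (simp add: mult.assoc)
  also have "\<dots> = -((z*x)*y)" using a by simp
  finally show ?thesis by (simp add: mult.assoc)
qed
lemma r_ca: "x*z = z*x \<Longrightarrow> y*z = -(z*y) \<Longrightarrow> (x*y)*z = -(z*(x*(y::'a::ring_1)))"
proof -
  assume a: "x*z = z*x" and c: "y*z = -(z*y)"
  have "(x*y)*z = x*(y*z)" by (rule mult.assoc)
  also have "\<dots> = -((x*z)*y)" using c by (simp add: mult.assoc)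
  also have "\<dots> = -((z*x)*y)" using a by simp
  finally show ?thesis by (simp add: mult.assoc)
qed

lemma sw_c: "x*y = y*x \<Longrightarrow> x*(y*z) = y*(x*(z::'a::ring_1))"
  by (simp add: mult.assoc[symmetric])
lemma neg_sw: "x*y = -(y*x) \<Longrightarrow> y*x = -(x*(y::'a::ring_1))"
  by simp
lemma sw_a: "x*y = -(y*x) \<Longrightarrow> x*(y*z) = -(y*(x*(z::'a::ring_1)))"
  by (simp add: mult.assoc[symmetric])

lemma alg_even:
  fixes e :: "complex \<Rightarrow> 'a::ring_1"
  assumes e: "complex_alg_emb e"
    and R1: "\<And>z. y2*(y1*(y4*z)) = y4*(y1*(y2*z))"
    and R2: "\<And>z. ym*(y4*(y1*(y2*z))) = -(y4*(y1*(y2*(ym*z))))"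
  shows "w1 + y4 * (e c2 * w0 + e (c0*cm) * y1 * wm + e cm * (y1*y2) * (w0 - e (c0*cmm*cm3) * ym * wmm))
      + e c4 * (e (c2*c1) * y3 * w0)
    = w1 + (e c2 * y4 + e (c4*c2*c1) * y3 + e cm * y2 * y1 * y4) * w0 + e (c0*cm) * y4 * y1 * wm
      + e (c0*cm*cmm*cm3) * ym * y2 * y1 * y4 * wmm"
proof -
  have e1: "\<And>x y. e x * e y = e (x*y)" by (simp add: emb_mult[OF e])
  have e2: "\<And>x y z. e x * (e y * z) = e (x*y) * z" by (simp add: emb_mult[OF e] mult.assoc)
  have m: "\<And>x. y4 * e x = e x * y4" "\<And>x. y1 * e x = e x * y1" "\<And>x. y2 * e x = e x * y2"
     "\<And>x. y3 * e x = e x * y3" "\<And>x. ym * e x = e x * ym"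
    by (rule emb_c[OF e, symmetric])+
  have m2: "\<And>x z. y4 * (e x * z) = e x * (y4 * z)" "\<And>x z. y1 * (e x * z) = e x * (y1 * z)"
     "\<And>x z. y2 * (e x * z) = e x * (y2 * z)" "\<And>x z. y3 * (e x * z) = e x * (y3 * z)"
     "\<And>x z. ym * (e x * z) = e x * (ym * z)"
    by (rule emb_cz[OF e])+
  show ?thesis by (simp add: algebra_simps e1 e2 m m2 R1 R2)
qed

context
  fixes emb :: "complex \<Rightarrow> 'a::ring_1" and h :: "nat \<Rightarrow> 'a" and b \<theta> :: "nat \<Rightarrow> complex" and k :: nat
  assumes emb: "complex_alg_emb emb"
    and ffd: "FFD emb (2*k) h b"
    and bnz: "\<forall>j. 1 \<le> j \<and> j \<le> 2*k \<longrightarrow> b j \<noteq> 0"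
begin

abbreviation "xH \<equiv> Hn emb b h \<theta>"
abbreviation "xC \<equiv> Cn \<theta>"
abbreviation "xg \<equiv> gate emb b h \<theta>"
abbreviation "xgd \<equiv> gd emb b h \<theta>"
abbreviation "xW \<equiv> WW emb b h \<theta>"

lemma h_anti: assumes "1 \<le> i" "i \<le> 2*k" "1 \<le> j" "j \<le> 2*k" "i = j+1 \<or> j = i+1 \<or> i = j+2 \<or> j = i+2"
  shows "h i * h j = - (h j * h i)"
proof -
  have f1: "\<And>m. 1 \<le> m \<Longrightarrow> m + 1 \<le> 2*k \<Longrightarrow> h m * h (m+1) = - (h (m+1) * h m)"
   and f2: "\<And>m. 1 \<le> m \<Longrightarrow> m + 2 \<le> 2*k \<Longrightarrow> h m * h (m+2) = - (h (m+2) * h m)"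
    using ffd unfolding FFD_def by blast+
  have sw: "\<And>x y. x * y = - (y * x) \<Longrightarrow> y * x = - (x * (y::'a))"
    by (metis minus_minus)
  show ?thesis using assms(5)
  proof (elim disjE)
    assume "i = j+1" then show ?thesis using f1[of j] assms sw by auto
  next
    assume "j = i+1" then show ?thesis using f1[of i] assms by auto
  next
    assume "i = j+2" then show ?thesis using f2[of j] assms sw by auto
  next
    assume "j = i+2" then show ?thesis using f2[of i] assms by auto
  qed
qed

lemma h_cmt: assumes "1 \<le> i" "i \<le> 2*k" "1 \<le> j" "j \<le> 2*k" "i+2 < j \<or> j+2 < i"
  shows "h i * h j = h j * h i"
  using ffd assms unfolding FFD_def by blast

lemma h_sq: assumes "1 \<le> i" "i \<le> 2*k" shows "h i * h i = emb ((b i)^2)"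
  using ffd assms unfolding FFD_def by blast

lemma H_h_anti: assumes "i \<le> 2*k" "1 \<le> j" "j \<le> 2*k" "i = j+1 \<or> j = i+1 \<or> i = j+2 \<or> j = i+2"
  shows "xH i * h j = - (h j * xH i)"
proof (cases "i = 0")
  case True then show ?thesis by simp
next
  case False
  let ?s = "emb (sin (\<theta> i) / b i)"
  have "xH i * h j = ?s * (h i * h j)" using False by (simp add: Hn_pos mult.assoc)
  also have "\<dots> = - (?s * h j * h i)" using h_anti[of i j] assms False by (simp add: mult.assoc)
  also have "?s * h j = h j * ?s" by (rule emb_c[OF emb])
  finally show ?thesis using False by (simp add: Hn_pos mult.assoc)
qed

lemma H_h_cmt: assumes "i \<le> 2*k" "1 \<le> j" "j \<le> 2*k" "i+2 < j \<or> j+2 < i \<or> i = 0"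
  shows "xH i * h j = h j * xH i"
proof (cases "i = 0")
  case True then show ?thesis by simp
next
  case False
  let ?s = "emb (sin (\<theta> i) / b i)"
  have "xH i * h j = ?s * (h i * h j)" using False by (simp add: Hn_pos mult.assoc)
  also have "\<dots> = (?s * h j * h i)" using h_cmt[of i j] assms False by (simp add: mult.assoc)
  also have "?s * h j = h j * ?s" by (rule emb_c[OF emb])
  finally show ?thesis using False by (simp add: Hn_pos mult.assoc)
qed

lemma HH_anti: assumes "i \<le> 2*k" "j \<le> 2*k" "i = j+1 \<or> j = i+1 \<or> i = j+2 \<or> j = i+2 \<or> i = 0 \<or> j = 0"
  shows "xH i * xH j = - (xH j * xH i)"
proof (cases "j = 0 \<or> i = 0")
  case True then show ?thesis by auto
next
  case False
  let ?s = "emb (sin (\<theta> j) / b j)"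
  have "xH i * xH j = (xH i * ?s) * h j" using False by (simp add: Hn_pos mult.assoc)
  also have "xH i * ?s = ?s * xH i" by (rule emb_c[OF emb, symmetric])
  also have "?s * xH i * h j = - (?s * h j * xH i)" using H_h_anti[of i j] assms False by (simp add: mult.assoc)
  finally show ?thesis using False by (simp add: Hn_pos mult.assoc)
qed

lemma HH_cmt: assumes "i \<le> 2*k" "j \<le> 2*k" "i+2 < j \<or> j+2 < i \<or> i = 0 \<or> j = 0"
  shows "xH i * xH j = xH j * xH i"
proof (cases "j = 0 \<or> i = 0")
  case True then show ?thesis by auto
next
  case False
  let ?s = "emb (sin (\<theta> j) / b j)"
  have "xH i * xH j = (xH i * ?s) * h j" using False by (simp add: Hn_pos mult.assoc)
  also have "xH i * ?s = ?s * xH i" by (rule emb_c[OF emb, symmetric])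
  also have "?s * xH i * h j = (?s * h j * xH i)" using H_h_cmt[of i j] assms False by (simp add: mult.assoc)
  finally show ?thesis using False by (simp add: Hn_pos mult.assoc)
qed

lemma g_sq: assumes "1 \<le> j" "j \<le> 2*k" shows "xg j * xg j = 1 + xH j"
proof -
  define \<alpha> where "\<alpha> = cos (\<theta> j / 2)"
  define \<beta> where "\<beta> = sin (\<theta> j / 2) / b j"
  have bj: "b j \<noteq> 0" using bnz assms by auto
  have hh: "h j * h j = emb ((b j)^2)" using h_sq assms by blast
  have e3: "\<And>x. h j * emb x = emb x * h j" by (rule emb_c[OF emb, symmetric])
  have e4: "\<And>x z. h j * (emb x * z) = emb x * (h j * z)" by (metis e3 mult.assoc)
  have e2: "\<And>x y z. emb x * (emb y * z) = emb (x*y) * z" by (simp add: emb_mult[OF emb] mult.assoc)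
  have e1: "\<And>x y. emb x * emb y = emb (x*y)" by (simp add: emb_mult[OF emb])
  have "xg j * xg j = emb (\<alpha>*\<alpha>) + emb (\<alpha>*\<beta>) * h j + (emb (\<beta>*\<alpha>) * h j + emb (\<beta>*(\<beta>*(b j)^2)))"
    unfolding gate_def \<alpha>_def[symmetric] \<beta>_def[symmetric]
    by (simp add: distrib_left distrib_right mult.assoc e1 e2 e3 e4 hh)
  also have "\<dots> = emb (\<alpha>*\<alpha> + \<beta>*(\<beta>*(b j)^2)) + emb (\<alpha>*\<beta> + \<beta>*\<alpha>) * h j"
    by (simp only: emb_add[OF emb] distrib_right add_ac)
  also have "\<alpha>*\<alpha> + \<beta>*(\<beta>*(b j)^2) = 1"
    unfolding \<alpha>_def \<beta>_def using bj half_sq[of "\<theta> j"] by (simp add: field_simps power2_eq_square)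
  also have "\<alpha>*\<beta> + \<beta>*\<alpha> = sin (\<theta> j) / b j"
    unfolding \<alpha>_def \<beta>_def using half_sin[of "\<theta> j"] by (simp add: field_simps)
  finally show ?thesis using assms by (simp add: emb_1[OF emb] Hn_pos)
qed

lemma gd_g: assumes "1 \<le> j" "j \<le> 2*k" shows "xgd j * xg j = emb (xC j)"
proof -
  define \<alpha> where "\<alpha> = cos (\<theta> j / 2)"
  define \<beta> where "\<beta> = sin (\<theta> j / 2) / b j"
  have bj: "b j \<noteq> 0" using bnz assms by auto
  have hh: "h j * h j = emb ((b j)^2)" using h_sq assms by blast
  have e3: "\<And>x. h j * emb x = emb x * h j" by (rule emb_c[OF emb, symmetric])
  have e4: "\<And>x z. h j * (emb x * z) = emb x * (h j * z)" by (metis e3 mult.assoc)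
  have e2: "\<And>x y z. emb x * (emb y * z) = emb (x*y) * z" by (simp add: emb_mult[OF emb] mult.assoc)
  have e1: "\<And>x y. emb x * emb y = emb (x*y)" by (simp add: emb_mult[OF emb])
  have "xgd j * xg j = emb (\<alpha>*\<alpha>) + emb (\<alpha>*\<beta>) * h j - (emb (\<beta>*\<alpha>) * h j + emb (\<beta>*(\<beta>*(b j)^2)))"
    unfolding gate_def gd_def \<alpha>_def[symmetric] \<beta>_def[symmetric]
    by (simp add: distrib_left distrib_right left_diff_distrib mult.assoc e1 e2 e3 e4 hh)
  also have "\<dots> = emb (\<alpha>*\<alpha> - \<beta>*(\<beta>*(b j)^2))"
    by (simp add: emb_diff[OF emb] mult.commute)
  also have "\<alpha>*\<alpha> - \<beta>*(\<beta>*(b j)^2) = cos (\<theta> j)"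
    unfolding \<alpha>_def \<beta>_def using bj half_cos[of "\<theta> j"] by (simp add: field_simps power2_eq_square)
  finally show ?thesis using assms by (simp add: Cn_pos)
qed


lemma WE: assumes "2*p+2 \<le> 2*k"
  shows "xW (Suc p) 1 = xW p 1 + xW p (xH (2*p+2)) + emb (xC (2*p+2)) * xW p (xH (2*p+1))"
proof -
  have a: "xH (2*p+1) * h (2*p+2) = - (h (2*p+2) * xH (2*p+1))" by (rule H_h_anti) (use assms in auto)
  have s1: "xg (2*p+1) * xg (2*p+1) = 1 + xH (2*p+1)" by (rule g_sq) (use assms in auto)
  have s2: "xg (2*p+2) * xg (2*p+2) = 1 + xH (2*p+2)" by (rule g_sq) (use assms in auto)
  have d2: "xgd (2*p+2) * xg (2*p+2) = emb (xC (2*p+2))" by (rule gd_g) (use assms in auto)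
  have "xg (2*p+2) * xg (2*p+1) * 1 * xg (2*p+1) * xg (2*p+2) = xg (2*p+2) * (xg (2*p+1) * xg (2*p+1)) * xg (2*p+2)"
    by (simp add: mult.assoc)
  also have "\<dots> = xg (2*p+2) * xg (2*p+2) + (xg (2*p+2) * xH (2*p+1)) * xg (2*p+2)"
    unfolding s1 by (simp add: distrib_left distrib_right)
  also have "xg (2*p+2) * xH (2*p+1) = xH (2*p+1) * xgd (2*p+2)" by (rule gate_acomm[where h=h, OF emb a])
  also have "xH (2*p+1) * xgd (2*p+2) * xg (2*p+2) = emb (xC (2*p+2)) * xH (2*p+1)"
    by (simp only: mult.assoc d2 emb_c[OF emb, of _ "xH (2*p+1)"])
  finally have i: "xg (2*p+2) * xg (2*p+1) * 1 * xg (2*p+1) * xg (2*p+2) = 1 + xH (2*p+2) + emb (xC (2*p+2)) * xH (2*p+1)"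
    unfolding s2 .
  show ?thesis unfolding WW_Suc[OF emb] i WW_add[OF emb] WW_emb[OF emb] ..
qed

lemma WA: assumes "2*p+1 \<le> 2*k"
  shows "xW p (xH (2*p+1)) = emb (xC (2*p) * xC (2*p-1)) * xH (2*p+1) * xW (p-1) 1"
proof (cases p)
  case 0 then show ?thesis by (simp add: WW_0[OF emb] emb_1[OF emb])
next
  case (Suc q)
  have r: "2*p = 2*q+2" "2*p - 1 = 2*q+1" "2*p+1 = 2*q+3" "p - 1 = q" using Suc by auto
  have a1: "xH (2*q+3) * h (2*q+1) = - (h (2*q+1) * xH (2*q+3))" by (rule H_h_anti) (use assms r in auto)
  have a2: "xH (2*q+3) * h (2*q+2) = - (h (2*q+2) * xH (2*q+3))" by (rule H_h_anti) (use assms r in auto)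
  have d1: "xgd (2*q+1) * xg (2*q+1) = emb (xC (2*q+1))" by (rule gd_g) (use assms r in auto)
  have d2: "xgd (2*q+2) * xg (2*q+2) = emb (xC (2*q+2))" by (rule gd_g) (use assms r in auto)
  have "xg (2*q+2) * xg (2*q+1) * xH (2*q+3) * xg (2*q+1) * xg (2*q+2)
      = xg (2*q+2) * (xg (2*q+1) * xH (2*q+3)) * xg (2*q+1) * xg (2*q+2)" by (simp add: mult.assoc)
  also have "xg (2*q+1) * xH (2*q+3) = xH (2*q+3) * xgd (2*q+1)" by (rule gate_acomm[where h=h, OF emb a1])
  also have "xg (2*q+2) * (xH (2*q+3) * xgd (2*q+1)) * xg (2*q+1) * xg (2*q+2)
      = (xg (2*q+2) * xH (2*q+3)) * (xgd (2*q+1) * xg (2*q+1)) * xg (2*q+2)" by (simp add: mult.assoc)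
  also have "xg (2*q+2) * xH (2*q+3) = xH (2*q+3) * xgd (2*q+2)" by (rule gate_acomm[where h=h, OF emb a2])
  also have "xH (2*q+3) * xgd (2*q+2) * (xgd (2*q+1) * xg (2*q+1)) * xg (2*q+2)
      = xH (2*q+3) * (emb (xC (2*q+1)) * (xgd (2*q+2) * xg (2*q+2)))"
    unfolding d1 by (simp only: mult.assoc emb_cz[OF emb, of "xgd (2*q+2)"])
  also have "\<dots> = emb (xC (2*q+2) * xC (2*q+1)) * xH (2*q+3)"
    unfolding d2 by (simp only: emb_mult[OF emb, symmetric] emb_c[OF emb, of _ "xH (2*q+3)"] mult.commute[of "xC (2*q+2)"])
  finally have i: "xg (2*q+2) * xg (2*q+1) * xH (2*q+3) * xg (2*q+1) * xg (2*q+2) = emb (xC (2*q+2) * xC (2*q+1)) * xH (2*q+3)" .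
  have cm: "\<And>j. 1 \<le> j \<Longrightarrow> j \<le> 2*q \<Longrightarrow> xH (2*q+3) * h j = h j * xH (2*q+3)"
    by (rule H_h_cmt) (use assms r in auto)
  have "xW p (xH (2*p+1)) = xW (Suc q) (xH (2*q+3))" unfolding r(3) by (simp only: Suc)
  also have "\<dots> = emb (xC (2*q+2) * xC (2*q+1)) * (xH (2*q+3) * xW q 1)"
    unfolding WW_Suc[OF emb] i WW_emb[OF emb] using WW_left[OF emb cm, where y=1] by (simp only: mult_1_right)
  finally have X: "xW p (xH (2*p+1)) = emb (xC (2*q+2) * xC (2*q+1)) * (xH (2*q+3) * xW q 1)" .
  have rr: "xC (2*p) = xC (2*q+2)" "xC (2*p-1) = xC (2*q+1)" "xH (2*p+1) = xH (2*q+3)" "xW (p-1) 1 = xW q 1"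
    by (simp only: r(1), simp only: r(2), simp only: r(3), simp only: r(4))
  show ?thesis using X unfolding rr by (simp only: mult.assoc)
qed

lemma WB: assumes "2*p+4 \<le> 2*k"
  shows "xW (Suc p) (xH (2*p+4)) = xH (2*p+4) * (emb (xC (2*p+2)) * xW p 1 + xW p (xH (2*p+1)) + xW p (xH (2*p+1) * xH (2*p+2)))"
proof -
  have c1: "xH (2*p+4) * h (2*p+1) = h (2*p+1) * xH (2*p+4)" by (rule H_h_cmt) (use assms in auto)
  have a2: "xH (2*p+4) * h (2*p+2) = - (h (2*p+2) * xH (2*p+4))" by (rule H_h_anti) (use assms in auto)
  have a12: "xH (2*p+1) * h (2*p+2) = - (h (2*p+2) * xH (2*p+1))" by (rule H_h_anti) (use assms in auto)
  have s1: "xg (2*p+1) * xg (2*p+1) = 1 + xH (2*p+1)" by (rule g_sq) (use assms in auto)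
  have s2: "xg (2*p+2) * xg (2*p+2) = 1 + xH (2*p+2)" by (rule g_sq) (use assms in auto)
  have d2: "xgd (2*p+2) * xg (2*p+2) = emb (xC (2*p+2))" by (rule gd_g) (use assms in auto)
  have "xg (2*p+2) * xg (2*p+1) * xH (2*p+4) * xg (2*p+1) * xg (2*p+2)
      = xg (2*p+2) * (xg (2*p+1) * xH (2*p+4)) * xg (2*p+1) * xg (2*p+2)" by (simp add: mult.assoc)
  also have "xg (2*p+1) * xH (2*p+4) = xH (2*p+4) * xg (2*p+1)" by (rule gate_cmt[where h=h, OF emb c1])
  also have "xg (2*p+2) * (xH (2*p+4) * xg (2*p+1)) * xg (2*p+1) * xg (2*p+2)
      = (xg (2*p+2) * xH (2*p+4)) * (xg (2*p+1) * xg (2*p+1)) * xg (2*p+2)" by (simp add: mult.assoc)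
  also have "xg (2*p+2) * xH (2*p+4) = xH (2*p+4) * xgd (2*p+2)" by (rule gate_acomm[where h=h, OF emb a2])
  also have "xH (2*p+4) * xgd (2*p+2) * (xg (2*p+1) * xg (2*p+1)) * xg (2*p+2)
     = xH (2*p+4) * (xgd (2*p+2) * xg (2*p+2) + (xgd (2*p+2) * xH (2*p+1)) * xg (2*p+2))"
    unfolding s1 by (simp add: mult.assoc distrib_left distrib_right)
  also have "xgd (2*p+2) * xH (2*p+1) = xH (2*p+1) * xg (2*p+2)" by (rule gd_acomm[where h=h, OF emb a12])
  also have "xH (2*p+1) * xg (2*p+2) * xg (2*p+2) = xH (2*p+1) + xH (2*p+1) * xH (2*p+2)"
    by (simp only: mult.assoc s2 distrib_left mult_1_right)
  finally have i: "xg (2*p+2) * xg (2*p+1) * xH (2*p+4) * xg (2*p+1) * xg (2*p+2)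
     = xH (2*p+4) * (emb (xC (2*p+2)) * 1 + xH (2*p+1) + xH (2*p+1) * xH (2*p+2))"
    unfolding d2 by (simp add: add.assoc)
  have cm: "\<And>j. 1 \<le> j \<Longrightarrow> j \<le> 2*p \<Longrightarrow> xH (2*p+4) * h j = h j * xH (2*p+4)"
    by (rule H_h_cmt) (use assms in auto)
  have L: "\<And>y. xW p (xH (2*p+4) * y) = xH (2*p+4) * xW p y" by (rule WW_left[OF emb cm])
  show ?thesis unfolding WW_Suc[OF emb] i L WW_add[OF emb] WW_emb[OF emb] ..
qed

lemma WC: assumes "2*n+2 \<le> 2*k"
  shows "xW n (xH (2*n+1) * xH (2*n+2)) = emb (xC (2*n-1)) * (xH (2*n+1) * xH (2*n+2))
     * (xW n 1 - emb (xC (2*n) * xC (2*n-2) * xC (2*n-3)) * xH (2*n-1) * xW (n-2) 1)"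
proof (cases n)
  case 0 then show ?thesis by (simp add: WW_0[OF emb] emb_1[OF emb])
next
  case (Suc p)
  have r: "2*n = 2*p+2" "2*n - 1 = 2*p+1" "2*n+1 = 2*p+3" "2*n+2 = 2*p+4" "2*n-2 = 2*p" "2*n-3 = 2*p-1"
    "n - 2 = p - 1" using Suc by auto
  have q1a: "xH (2*p+3) * h (2*p+1) = - (h (2*p+1) * xH (2*p+3))" by (rule H_h_anti) (use assms r in auto)
  have q1c: "xH (2*p+4) * h (2*p+1) = h (2*p+1) * xH (2*p+4)" by (rule H_h_cmt) (use assms r in auto)
  have q2a: "xH (2*p+3) * h (2*p+2) = - (h (2*p+2) * xH (2*p+3))" by (rule H_h_anti) (use assms r in auto)
  have q2b: "xH (2*p+4) * h (2*p+2) = - (h (2*p+2) * xH (2*p+4))" by (rule H_h_anti) (use assms r in auto)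
  let ?Q = "xH (2*p+3) * xH (2*p+4)"
  have Q1: "?Q * h (2*p+1) = - (h (2*p+1) * ?Q)" by (rule r_ac[OF q1a q1c])
  have Q2: "?Q * h (2*p+2) = h (2*p+2) * ?Q" by (rule r_aa[OF q2a q2b])
  have s2: "xg (2*p+2) * xg (2*p+2) = 1 + xH (2*p+2)" by (rule g_sq) (use assms r in auto)
  have d1: "xgd (2*p+1) * xg (2*p+1) = emb (xC (2*p+1))" by (rule gd_g) (use assms r in auto)
  have "xg (2*p+2) * xg (2*p+1) * ?Q * xg (2*p+1) * xg (2*p+2)
      = xg (2*p+2) * (xg (2*p+1) * ?Q) * xg (2*p+1) * xg (2*p+2)" by (simp add: mult.assoc)
  also have "xg (2*p+1) * ?Q = ?Q * xgd (2*p+1)" by (rule gate_acomm[where h=h, OF emb Q1])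
  also have "xg (2*p+2) * (?Q * xgd (2*p+1)) * xg (2*p+1) * xg (2*p+2)
      = (xg (2*p+2) * ?Q) * (xgd (2*p+1) * xg (2*p+1)) * xg (2*p+2)" by (simp add: mult.assoc)
  also have "xg (2*p+2) * ?Q = ?Q * xg (2*p+2)" by (rule gate_cmt[where h=h, OF emb Q2])
  also have "?Q * xg (2*p+2) * (xgd (2*p+1) * xg (2*p+1)) * xg (2*p+2) = emb (xC (2*p+1)) * (?Q * (1 + xH (2*p+2)))"
    unfolding d1 s2[symmetric]
    by (simp only: mult.assoc emb_cz[OF emb, of "xg (2*p+2)"] emb_cz[OF emb, of "xH (2*p+3)"] emb_cz[OF emb, of "xH (2*p+4)"])
  finally have i: "xg (2*p+2) * xg (2*p+1) * ?Q * xg (2*p+1) * xg (2*p+2) = emb (xC (2*p+1)) * (?Q * (1 + xH (2*p+2)))" .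
  have cm: "\<And>j. 1 \<le> j \<Longrightarrow> j \<le> 2*p \<Longrightarrow> ?Q * h j = h j * ?Q"
  proof -
    fix j assume j: "1 \<le> j" "j \<le> 2*p"
    have "xH (2*p+3) * h j = h j * xH (2*p+3)" by (rule H_h_cmt) (use assms r j in auto)
    moreover have "xH (2*p+4) * h j = h j * xH (2*p+4)" by (rule H_h_cmt) (use assms r j in auto)
    ultimately show "?Q * h j = h j * ?Q" by (rule cm)
  qed
  have E: "xW (Suc p) 1 = xW p 1 + xW p (xH (2*p+2)) + emb (xC (2*p+2)) * xW p (xH (2*p+1))"
    by (rule WE) (use assms r in auto)
  have A: "xW p (xH (2*p+1)) = emb (xC (2*p) * xC (2*p-1)) * xH (2*p+1) * xW (p-1) 1"
    by (rule WA) (use assms r in auto)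
  have L: "\<And>y. xW p (?Q * y) = ?Q * xW p y" by (rule WW_left[OF emb cm])
  have F: "xW (Suc p) ?Q = emb (xC (2*p+1)) * (?Q * (xW p 1 + xW p (xH (2*p+2))))"
    unfolding WW_Suc[OF emb] i WW_emb[OF emb] L WW_add[OF emb] ..
  have E': "xW p 1 + xW p (xH (2*p+2)) = xW (Suc p) 1 - emb (xC (2*p+2)) * xW p (xH (2*p+1))"
    unfolding E by simp
  have X: "xW (Suc p) ?Q = emb (xC (2*p+1)) * ?Q * (xW (Suc p) 1 - emb (xC (2*p+2) * xC (2*p) * xC (2*p-1)) * xH (2*p+1) * xW (p-1) 1)"
    unfolding F E' A by (simp only: mult.assoc emb_mult[OF emb])
  have rr: "xC (2*n) = xC (2*p+2)" "xC (2*n-1) = xC (2*p+1)" "xC (2*n-2) = xC (2*p)" "xC (2*n-3) = xC (2*p-1)"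
    "xH (2*n+1) = xH (2*p+3)" "xH (2*n+2) = xH (2*p+4)" "xH (2*n-1) = xH (2*p+1)" "xW (n-2) 1 = xW (p-1) 1"
    "xW n = xW (Suc p)" by (simp only: r(1), simp only: r(2), simp only: r(5), simp only: r(6),
    simp only: r(3), simp only: r(4), simp only: r(2), simp only: r(7), simp only: Suc)
  show ?thesis unfolding rr by (rule X)
qed


abbreviation "xV \<equiv> Vn emb b h \<theta>"

lemma nat2: "nat (2 * int m) = 2*m" by (simp add: nat_mult_distrib)

lemma Vn_W: "n = 2*m \<Longrightarrow> xV n = xW m 1"
  by (cases "m = 0") (simp_all add: Vn_def Vop_def Veven_def WW_def Gprod_0 GprodT_0 nat2)

lemma gate_zero: "gate emb b h (\<theta>(j := 0)) j = 1"
  by (simp add: gate_def emb_1[OF emb] emb_0[OF emb])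

lemma Vn_odd: assumes "2*q+2 \<le> 2*k"
  shows "xV (2*q+1) = xW q 1 + xW q (xH (2*q+1))"
proof -
  let ?t = "\<theta>(2*q+2 := 0)"
  have "xV (2*q+1) = Veven emb b h ?t (Suc q)"
    by (simp add: Vn_def Vop_def nat_add_distrib nat2)
  also have "\<dots> = Gprod (gate emb b h ?t) q * (1 * xg (2*q+1)) * ((xg (2*q+1) * 1) * GprodT (gate emb b h ?t) q)"
    unfolding Veven_def Gprod_Suc GprodT_Suc gate_zero by (simp add: gate_def)
  also have "Gprod (gate emb b h ?t) q = Gprod xg q" by (rule Gprod_cong) (simp add: gate_def)
  also have "GprodT (gate emb b h ?t) q = GprodT xg q" by (rule GprodT_cong) (simp add: gate_def)
  also have "Gprod xg q * (1 * xg (2*q+1)) * ((xg (2*q+1) * 1) * GprodT xg q) = xW q (xg (2*q+1) * xg (2*q+1))"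
    by (simp add: WW_def mult.assoc)
  also have "xg (2*q+1) * xg (2*q+1) = 1 + xH (2*q+1)" by (rule g_sq) (use assms in auto)
  finally show ?thesis unfolding WW_add[OF emb] .
qed

lemma V_odd_main: assumes "1 \<le> k"
  shows "xV (2*k-1) = xV (2*k-2) + emb (xC (2*k-2) * xC (2*k-3)) * xH (2*k-1) * xV (2*k-4)"
proof -
  obtain q where q: "k = Suc q" using assms by (cases k) auto
  have rr: "xV (2*k-1) = xV (2*q+1)" "xV (2*k-2) = xW q 1" "xC (2*k-2) = xC (2*q)" "xC (2*k-3) = xC (2*q-1)"
     "xH (2*k-1) = xH (2*q+1)" "xV (2*k-4) = xW (q-1) 1"
    using q Vn_W[of "2*k-2" q] Vn_W[of "2*k-4" "q-1"] by (simp_all add: diff_mult_distrib2)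
  have A: "xW q (xH (2*q+1)) = emb (xC (2*q) * xC (2*q-1)) * xH (2*q+1) * xW (q-1) 1" by (rule WA) (use q in auto)
  have O: "xV (2*q+1) = xW q 1 + xW q (xH (2*q+1))" by (rule Vn_odd) (use q in auto)
  show ?thesis unfolding rr O A ..
qed


lemma V_even_p: assumes "2*p+4 \<le> 2*k"
  shows "xV (2*p+4) = xV (2*p+2)
    + (emb (xC (2*p+2)) * xH (2*p+4) + emb (xC (2*p+4) * xC (2*p+2) * xC (2*p+1)) * xH (2*p+3)
       + emb (xC (2*p-1)) * xH (2*p+2) * xH (2*p+1) * xH (2*p+4)) * xV (2*p)
    + emb (xC (2*p) * xC (2*p-1)) * xH (2*p+4) * xH (2*p+1) * xV (2*p-2)
    + emb (xC (2*p) * xC (2*p-1) * xC (2*p-2) * xC (2*p-3)) * xH (2*p-1) * xH (2*p+2) * xH (2*p+1) * xH (2*p+4) * xV (2*p-4)"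
proof -
  have v: "xV (2*p+4) = xW (Suc (Suc p)) 1" "xV (2*p+2) = xW (Suc p) 1" "xV (2*p) = xW p 1"
     "xV (2*p-2) = xW (p-1) 1" "xV (2*p-4) = xW (p-2) 1"
    by (rule Vn_W; simp add: diff_mult_distrib2)+
  have eqs: "2*Suc p+2 = 2*p+4" "2*Suc p+1 = 2*p+3" by simp_all
  have eqs': "2*Suc p = 2*p+2" "2*p+2+1 = 2*p+3" "2*p+2-1 = 2*p+1" "Suc p - 1 = p" by simp_all
  have p1: "2*Suc p+2 \<le> 2*k" "2*Suc p+1 \<le> 2*k" using assms by simp_all
  have E1: "xW (Suc (Suc p)) 1 = xW (Suc p) 1 + xW (Suc p) (xH (2*p+4)) + emb (xC (2*p+4)) * xW (Suc p) (xH (2*p+3))"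
    by (rule WE[OF p1(1), unfolded eqs])
  have A1: "xW (Suc p) (xH (2*p+3)) = emb (xC (2*p+2) * xC (2*p+1)) * xH (2*p+3) * xW p 1"
    by (rule WA[OF p1(2), unfolded eqs'])
  have B: "xW (Suc p) (xH (2*p+4)) = xH (2*p+4) * (emb (xC (2*p+2)) * xW p 1 + xW p (xH (2*p+1)) + xW p (xH (2*p+1) * xH (2*p+2)))"
    by (rule WB) (use assms in simp)
  have A0: "xW p (xH (2*p+1)) = emb (xC (2*p) * xC (2*p-1)) * xH (2*p+1) * xW (p-1) 1"
    by (rule WA) (use assms in simp)
  have C0: "xW p (xH (2*p+1) * xH (2*p+2)) = emb (xC (2*p-1)) * (xH (2*p+1) * xH (2*p+2))
     * (xW p 1 - emb (xC (2*p) * xC (2*p-2) * xC (2*p-3)) * xH (2*p-1) * xW (p-2) 1)"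
    by (rule WC) (use assms in simp)
  have k41: "xH (2*p+4) * xH (2*p+1) = xH (2*p+1) * xH (2*p+4)" by (rule HH_cmt) (use assms in auto)
  have k42: "xH (2*p+4) * xH (2*p+2) = - (xH (2*p+2) * xH (2*p+4))" by (rule HH_anti) (use assms in auto)
  have k12: "xH (2*p+1) * xH (2*p+2) = - (xH (2*p+2) * xH (2*p+1))" by (rule HH_anti) (use assms in auto)
  have km4: "xH (2*p-1) * xH (2*p+4) = xH (2*p+4) * xH (2*p-1)" by (rule HH_cmt) (use assms in auto)
  have km1: "xH (2*p-1) * xH (2*p+1) = - (xH (2*p+1) * xH (2*p-1))" by (rule HH_anti) (use assms in auto)
  have km2: "xH (2*p-1) * xH (2*p+2) = xH (2*p+2) * xH (2*p-1)" by (rule HH_cmt) (use assms in auto)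
  have t1: "\<And>z. xH (2*p+1) * (xH (2*p+4) * z) = xH (2*p+4) * (xH (2*p+1) * z)"
    by (rule sw_c) (rule k41[symmetric])
  have t2: "\<And>z. xH (2*p+2) * (xH (2*p+4) * z) = - (xH (2*p+4) * (xH (2*p+2) * z))"
    by (rule sw_a) (rule neg_sw[OF k42])
  have t3: "\<And>z. xH (2*p+2) * (xH (2*p+1) * z) = - (xH (2*p+1) * (xH (2*p+2) * z))"
    by (rule sw_a) (rule neg_sw[OF k12])
  have s1: "\<And>z. xH (2*p-1) * (xH (2*p+4) * z) = xH (2*p+4) * (xH (2*p-1) * z)"
    by (rule sw_c) (rule km4)
  have s2: "\<And>z. xH (2*p-1) * (xH (2*p+1) * z) = - (xH (2*p+1) * (xH (2*p-1) * z))"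
    by (rule sw_a) (rule km1)
  have s3: "\<And>z. xH (2*p-1) * (xH (2*p+2) * z) = xH (2*p+2) * (xH (2*p-1) * z)"
    by (rule sw_c) (rule km2)
  have R1: "\<And>z. xH (2*p+2) * (xH (2*p+1) * (xH (2*p+4) * z)) = xH (2*p+4) * (xH (2*p+1) * (xH (2*p+2) * z))"
    by (simp only: t1 t2 t3 mult_minus_right minus_minus)
  have R2: "\<And>z. xH (2*p-1) * (xH (2*p+4) * (xH (2*p+1) * (xH (2*p+2) * z))) = - (xH (2*p+4) * (xH (2*p+1) * (xH (2*p+2) * (xH (2*p-1) * z))))"
    by (simp only: s1 s2 s3 mult_minus_right minus_minus)
  have e1: "\<And>x y. emb x * emb y = emb (x*y)" by (simp add: emb_mult[OF emb])
  have e2: "\<And>x y z. emb x * (emb y * z) = emb (x*y) * z" by (simp add: emb_mult[OF emb] mult.assoc)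
  have m: "\<And>i x. xH i * emb x = emb x * xH i" by (rule emb_c[OF emb, symmetric])
  have m2: "\<And>i x z. xH i * (emb x * z) = emb x * (xH i * z)" by (rule emb_cz[OF emb])
  show ?thesis unfolding v E1 B A0 C0 A1
    by (rule alg_even[OF emb R1 R2])
qed


lemma V_even_main: assumes "1 \<le> k"
  shows "xV (2*k) = xV (2*k-2)
    + (emb (xC (2*k-2)) * xH (2*k) + emb (xC (2*k) * xC (2*k-2) * xC (2*k-3)) * xH (2*k-1)
       + emb (xC (2*k-5)) * xH (2*k-2) * xH (2*k-3) * xH (2*k)) * xV (2*k-4)
    + emb (xC (2*k-4) * xC (2*k-5)) * xH (2*k) * xH (2*k-3) * xV (2*k-6)
    + emb (xC (2*k-4) * xC (2*k-5) * xC (2*k-6) * xC (2*k-7)) * xH (2*k-5) * xH (2*k-2) * xH (2*k-3) * xH (2*k) * xV (2*k-8)"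
proof (cases "k = 1")
  case True
  have "xV 2 = xW 1 1" by (rule Vn_W) simp
  also have "xW 1 1 = 1 + xH 2 + emb (xC 2) * xH 1"
    using WE[of 0] True by (simp add: WW_0[OF emb] numeral_2_eq_2)
  finally show ?thesis using True by (simp add: emb_1[OF emb])
next
  case False
  then obtain p where pp: "k = Suc (Suc p)" using assms by (cases k; cases "k - 1") auto
  have r1: "xV (2*k) = xV (2*p+4)" by (rule arg_cong[where f=xV]) (use pp in arith)
  have r2: "xV (2*k-2) = xV (2*p+2)" by (rule arg_cong[where f=xV]) (use pp in arith)
  have r3: "xC (2*k-2) = xC (2*p+2)" by (rule arg_cong[where f=xC]) (use pp in arith)
  have r4: "xH (2*k) = xH (2*p+4)" by (rule arg_cong[where f=xH]) (use pp in arith)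
  have r5: "xC (2*k) = xC (2*p+4)" by (rule arg_cong[where f=xC]) (use pp in arith)
  have r6: "xC (2*k-3) = xC (2*p+1)" by (rule arg_cong[where f=xC]) (use pp in arith)
  have r7: "xH (2*k-1) = xH (2*p+3)" by (rule arg_cong[where f=xH]) (use pp in arith)
  have r8: "xC (2*k-5) = xC (2*p-1)" by (rule arg_cong[where f=xC]) (use pp in arith)
  have r9: "xH (2*k-2) = xH (2*p+2)" by (rule arg_cong[where f=xH]) (use pp in arith)
  have r10: "xH (2*k-3) = xH (2*p+1)" by (rule arg_cong[where f=xH]) (use pp in arith)
  have r11: "xV (2*k-4) = xV (2*p)" by (rule arg_cong[where f=xV]) (use pp in arith)
  have r12: "xC (2*k-4) = xC (2*p)" by (rule arg_cong[where f=xC]) (use pp in arith)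
  have r13: "xV (2*k-6) = xV (2*p-2)" by (rule arg_cong[where f=xV]) (use pp in arith)
  have r14: "xC (2*k-6) = xC (2*p-2)" by (rule arg_cong[where f=xC]) (use pp in arith)
  have r15: "xC (2*k-7) = xC (2*p-3)" by (rule arg_cong[where f=xC]) (use pp in arith)
  have r16: "xH (2*k-5) = xH (2*p-1)" by (rule arg_cong[where f=xH]) (use pp in arith)
  have r17: "xV (2*k-8) = xV (2*p-4)" by (rule arg_cong[where f=xV]) (use pp in arith)
  note rr = r1 r2 r3 r4 r5 r6 r7 r8 r9 r10 r11 r12 r13 r14 r15 r16 r17
  show ?thesis unfolding rr by (rule V_even_p) (use pp in simp)
qed

end


lemma convn: assumes "\<And>j. j \<le> 0 \<Longrightarrow> F j = F 0"
  shows "F (2 * int k - numeral r) = F (int (2*k - numeral r))"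
proof (cases "numeral r \<le> 2*k")
  case True
  then have "int (2*k - numeral r) = 2 * int k - numeral r" by (simp add: of_nat_diff)
  then show ?thesis by simp
next
  case False
  then have "int (2*k - numeral r) = 0" by simp
  moreover have "int (2*k) < int (numeral r)" using False by (simp only: of_nat_less_iff not_le)
  then have "2 * int k - numeral r \<le> 0" by simp
  ultimately show ?thesis using assms by metis
qed

lemma conv1: assumes "\<And>j. j \<le> 0 \<Longrightarrow> F j = F 0"
  shows "F (2 * int k - 1) = F (int (2*k - 1))"
proof (cases "1 \<le> 2*k")
  case True
  then have "int (2*k - 1) = 2 * int k - 1" by (simp add: of_nat_diff)
  then show ?thesis by simp
next
  case False
  then have "int (2*k - 1) = 0" by simp
  moreover have "2 * int k - 1 \<le> 0" using False by simp
  ultimately show ?thesis using assms by metis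
qed

lemma conv0: "F (2 * int k) = F (int (2*k))" by simp

lemma cvV: "Vop emb b h \<theta> (2*int k - numeral r) = Vn emb b h \<theta> (2*k - numeral r)"
  unfolding Vn_def by (rule convn) (simp add: Vop_def)
lemma cvV1: "Vop emb b h \<theta> (2*int k - 1) = Vn emb b h \<theta> (2*k - 1)"
  unfolding Vn_def by (rule conv1) (simp add: Vop_def)
lemma cvV0: "Vop emb b h \<theta> (2*int k) = Vn emb b h \<theta> (2*k)"
  unfolding Vn_def by simp
lemma cvC: "cc \<theta> (2*int k - numeral r) = Cn \<theta> (2*k - numeral r)"
  unfolding Cn_def by (rule convn) (simp add: cc_def)
lemma cvC1: "cc \<theta> (2*int k - 1) = Cn \<theta> (2*k - 1)"
  unfolding Cn_def by (rule conv1) (simp add: cc_def)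
lemma cvC0: "cc \<theta> (2*int k) = Cn \<theta> (2*k)"
  unfolding Cn_def by simp
lemma cvH: "hp emb b h \<theta> (2*int k - numeral r) = Hn emb b h \<theta> (2*k - numeral r)"
  unfolding Hn_def by (rule convn) (simp add: hp_def)
lemma cvH1: "hp emb b h \<theta> (2*int k - 1) = Hn emb b h \<theta> (2*k - 1)"
  unfolding Hn_def by (rule conv1) (simp add: hp_def)
lemma cvH0: "hp emb b h \<theta> (2*int k) = Hn emb b h \<theta> (2*k)"
  unfolding Hn_def by simp

theorem mainTheorem11:
  fixes emb :: "complex \<Rightarrow> 'a::ring_1"
    and h :: "nat \<Rightarrow> 'a" and b \<theta> :: "nat \<Rightarrow> complex" and k :: nat
  assumes "complex_alg_emb emb"
    and "k \<ge> 1"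
    and "FFD emb (2*k) h b"
    and "\<forall>j. 1 \<le> j \<and> j \<le> 2*k \<longrightarrow> b j \<noteq> 0"
    and "\<forall>j. 1 \<le> j \<and> j \<le> 2*k \<longrightarrow> cos (\<theta> j) \<noteq> 0"
  defines "V \<equiv> Vop emb b h \<theta>" and "c \<equiv> cc \<theta>" and "h' \<equiv> hp emb b h \<theta>"
    and "K \<equiv> int k"
  shows "(V (2*K) = V (2*K-2)
           + (emb (c (2*K-2)) * h' (2*K)
              + emb (c (2*K) * c (2*K-2) * c (2*K-3)) * h' (2*K-1)
              + emb (c (2*K-5)) * h' (2*K-2) * h' (2*K-3) * h' (2*K)) * V (2*K-4)
           + emb (c (2*K-4) * c (2*K-5)) * h' (2*K) * h' (2*K-3) * V (2*K-6)
           + emb (c (2*K-4) * c (2*K-5) * c (2*K-6) * c (2*K-7))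
               * h' (2*K-5) * h' (2*K-2) * h' (2*K-3) * h' (2*K) * V (2*K-8)) \<and>
         (V (2*K-1) = V (2*K-2) + emb (c (2*K-2) * c (2*K-3)) * h' (2*K-1) * V (2*K-4))"
proof -
  show ?thesis unfolding V_def c_def h'_def K_def cvV cvV1 cvV0 cvC cvC1 cvC0 cvH cvH1 cvH0
    by (intro conjI V_even_main[OF assms(1) assms(3) assms(4) assms(2)] V_odd_main[OF assms(1) assms(3) assms(4) assms(2)])
qed

end
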